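(* For any finite interval $\Lambda\subset\mathbb Z$, the map $\boldsymbol\sigma_\Lambda:\mathcal D_\Lambda\to\{0,1\}^\Lambda$ assigning to each VMD tiling its particle configuration is injective.
   Context: Tilings of a finite interval $\Lambda$: a tile occupies consecutive sites and carries a 0/1 word (its particle content): void $0$; monomer $100$; dimer $011000$; left boundary dimer $11000$ (allowed only as the first tile of $\Lambda$); and, allowed only as the last tile of $\Lambda$: right dimer $011$, right 1-monomer $1$, right 2-monomer $10$, truncated 1-dimer $0110$, truncated 2-dimer $01100$. A root tiling $R$ of $\Lambda$ is a tiling of $\Lambda$ by consecutive tiles consisting of voids and monomers, optionally with a left boundary dimer as first tile and optionally with one of right dimer, right 1-monomer, right 2-monomer as last tile; $\mathcal R_\Lambda$ denotes their set. A VMD tiling derived from $R$ is obtained by choosing a collection of disjoint pairs of consecutive tiles of $R$, each pair being either two monomers (replaced by a dimer) or a monomer followed by a right $j$-monomer, $j\in\{1,2\}$ (replaced by the truncated $j$-dimer); $\mathcal D_\Lambda(R)$ is the set of these and $\mathcal D_\Lambda=\bigcup_{R\in\mathcal R_\Lambda}\mathcal D_\Lambda(R)$. The configuration $\boldsymbol\sigma_\Lambda(\mathbf D)\in\{0,1\}^\Lambda$ of a tiling $\mathbf D$ is the concatenation of the particle contents of its tiles. *)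

theory Defs
  imports Main
begin

text \<open>Tile types. Particle contents: void 0; monomer 100; dimer 011000;
left boundary dimer 11000; right dimer 011; right 1-monomer 1;
right 2-monomer 10; truncated 1-dimer 0110; truncated 2-dimer 01100.\<close>

datatype tile = Void | Mono | Dimer | LDimer | RDimer | RMono1 | RMono2 | TDimer1 | TDimer2

fun word :: "tile \<Rightarrow> nat list" where
  "word Void = [0]"
| "word Mono = [1,0,0]"
| "word Dimer = [0,1,1,0,0,0]"
| "word LDimer = [1,1,0,0,0]"
| "word RDimer = [0,1,1]"
| "word RMono1 = [1]"
| "word RMono2 = [1,0]"
| "word TDimer1 = [0,1,1,0]"
| "word TDimer2 = [0,1,1,0,0]"

text \<open>The finite interval is \<open>\<Lambda> = {a..b} \<subseteq> \<int>\<close> (empty if b < a). A tiling is a list of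
tiles placed consecutively from the left end a; it tiles \<Lambda> iff the total length is |\<Lambda>|.\<close>

definition tlen :: "tile list \<Rightarrow> nat" where
  "tlen ts = length (concat (map word ts))"

definition bulk_tile :: "tile \<Rightarrow> bool" where
  "bulk_tile t \<longleftrightarrow> t = Void \<or> t = Mono"

definition right_root_tile :: "tile \<Rightarrow> bool" where
  "right_root_tile t \<longleftrightarrow> t = RDimer \<or> t = RMono1 \<or> t = RMono2"

definition root_tilings :: "int \<Rightarrow> int \<Rightarrow> tile list set" where
  "root_tilings a b = {R. tlen R = card {a..b} \<and>
     (\<exists>L M E. R = L @ M @ E \<and> (L = [] \<or> L = [LDimer]) \<and> (\<forall>t\<in>set M. bulk_tile t) \<and>
        (E = [] \<or> (\<exists>t. E = [t] \<and> right_root_tile t)))}"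

inductive derived :: "tile list \<Rightarrow> tile list \<Rightarrow> bool" where
  nil: "derived [] []"
| keep: "derived R D \<Longrightarrow> derived (t # R) (t # D)"
| dimer: "derived R D \<Longrightarrow> derived (Mono # Mono # R) (Dimer # D)"
| tdimer1: "derived R D \<Longrightarrow> derived (Mono # RMono1 # R) (TDimer1 # D)"
| tdimer2: "derived R D \<Longrightarrow> derived (Mono # RMono2 # R) (TDimer2 # D)"

definition VMD_tilings :: "int \<Rightarrow> int \<Rightarrow> tile list set" where
  "VMD_tilings a b = {D. \<exists>R \<in> root_tilings a b. derived R D}"

text \<open>Configuration \<open>\<sigma>_\<Lambda>(D) \<in> {0,1}^\<Lambda>\<close>, represented as a function on \<int> that is
the concatenated particle content on \<Lambda> (site a + k carries letter k) and 0 outside \<Lambda>.\<close>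

definition sigma :: "int \<Rightarrow> int \<Rightarrow> tile list \<Rightarrow> int \<Rightarrow> nat" where
  "sigma a b D = (\<lambda>i. if a \<le> i \<and> i \<le> b then concat (map word D) ! nat (i - a) else 0)"

end

theory Submission
  imports Defs
begin

fun decm :: "nat list \<Rightarrow> tile list" where
  "decm [] = []"
| "decm (x#xs) = (if x = 0 then (if take 2 xs = [1,1] then
      (if xs = [1,1] then [RDimer] else if xs = [1,1,0] then [TDimer1]
       else if xs = [1,1,0,0] then [TDimer2] else Dimer # decm (drop 5 xs))
     else Void # decm xs)
   else (if xs = [] then [RMono1] else if xs = [0] then [RMono2] else Mono # decm (drop 2 xs)))"

definition dec :: "nat list \<Rightarrow> tile list" where
  "dec xs = (if take 5 xs = [1,1,0,0,0] then LDimer # decm (drop 5 xs) else decm xs)"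

definition ends :: "tile list set" where
  "ends = {[],[RDimer],[RMono1],[RMono2],[TDimer1],[TDimer2]}"

definition mids :: "tile set" where
  "mids = {Void, Mono, Dimer}"

lemma no11:
  assumes "set M \<subseteq> mids" "E \<in> ends"
  shows "take 2 (concat (map word (M@E))) \<noteq> [1,1]"
proof (cases M)
  case Nil then show ?thesis using assms by (auto simp: ends_def)
next
  case (Cons t M') then show ?thesis using assms by (cases t) (auto simp: mids_def)
qed

lemma decm_ok:
  assumes "set M \<subseteq> mids" "E \<in> ends"
  shows "decm (concat (map word (M@E))) = M@E"
  using assms
proof (induction M)
  case Nil then show ?case by (auto simp: ends_def)
next
  case (Cons t M)
  have h: "take 2 (concat (map word (M@E))) \<noteq> [1,1]" using no11 Cons.prems by auto
  have IH: "decm (concat (map word (M@E))) = M@E" using Cons by auto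
  have "t = Void \<or> t = Mono \<or> t = Dimer" using Cons.prems by (auto simp: mids_def)
  then show ?case using h IH by auto
qed

lemma dec_ok:
  assumes "L = [] \<or> L = [LDimer]" "set M \<subseteq> mids" "E \<in> ends"
  shows "dec (concat (map word (L@M@E))) = L@M@E"
proof -
  have h: "take 2 (concat (map word (M@E))) \<noteq> [1,1]" using no11 assms by auto
  have h5: "take 5 (concat (map word (M@E))) \<noteq> [1,1,0,0,0]"
  proof
    assume "take 5 (concat (map word (M@E))) = [1,1,0,0,0]"
    then have "take 2 (take 5 (concat (map word (M@E)))) = [1,1]" by simp
    moreover have "take 2 (take 5 (concat (map word (M@E)))) = take 2 (concat (map word (M@E)))"
      by (simp only: take_take) simp
    ultimately show False using h by simp
  qed
  show ?thesis using assms(1)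
  proof
    assume "L = []" then show ?thesis using h5 decm_ok[OF assms(2,3)] by (simp add: dec_def)
  next
    assume "L = [LDimer]" then show ?thesis using decm_ok[OF assms(2,3)] by (simp add: dec_def)
  qed
qed

lemma derived_tlen: "derived R D \<Longrightarrow> tlen D = tlen R"
  by (induction rule: derived.induct) (auto simp: tlen_def)

lemma derived_shape:
  "derived R D \<Longrightarrow> R = M @ E \<Longrightarrow> (\<forall>t\<in>set M. bulk_tile t) \<Longrightarrow>
   (E = [] \<or> (\<exists>t. E = [t] \<and> right_root_tile t)) \<Longrightarrow>
   \<exists>M' E'. D = M' @ E' \<and> set M' \<subseteq> mids \<and> E' \<in> ends"
proof (induction arbitrary: M rule: derived.induct)
  case nil
  then show ?case by (auto simp: ends_def)
next
  case (keep R D t)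
  show ?case
  proof (cases M)
    case Nil
    then have "t # R = E" using keep by simp
    then have "R = []" "E = [t]" "right_root_tile t" using keep.prems by auto
    then have "D = []" using keep.hyps by (auto elim: derived.cases)
    then show ?thesis using \<open>E = [t]\<close> \<open>right_root_tile t\<close>
      by (intro exI[of _ "[]"] exI[of _ "[t]"]) (auto simp: ends_def right_root_tile_def)
  next
    case (Cons t' M0)
    then have "t' = t" "R = M0 @ E" using keep.prems by auto
    then obtain M' E' where "D = M' @ E'" "set M' \<subseteq> mids" "E' \<in> ends"
      using keep.IH[of M0] keep.prems Cons by auto
    moreover have "t \<in> mids" using keep.prems Cons \<open>t' = t\<close> by (auto simp: bulk_tile_def mids_def)
    ultimately show ?thesis by (intro exI[of _ "t # M'"] exI[of _ E']) auto
  qed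
next
  case (dimer R D)
  show ?case
  proof (cases M)
    case Nil then show ?thesis using dimer.prems by (auto simp: right_root_tile_def)
  next
    case (Cons t' M1)
    show ?thesis
    proof (cases M1)
      case Nil then show ?thesis using dimer.prems Cons by (auto simp: right_root_tile_def)
    next
      case (Cons t'' M0)
      then have "R = M0 @ E" using dimer.prems \<open>M = t' # M1\<close> by auto
      then obtain M' E' where "D = M' @ E'" "set M' \<subseteq> mids" "E' \<in> ends"
        using dimer.IH[of M0] dimer.prems Cons \<open>M = t' # M1\<close> by auto
      then show ?thesis by (intro exI[of _ "Dimer # M'"] exI[of _ E']) (auto simp: mids_def)
    qed
  qed
next
  case (tdimer1 R D)
  show ?case
  proof (cases M)
    case Nil then show ?thesis using tdimer1.prems by (auto simp: right_root_tile_def)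
  next
    case (Cons t' M1)
    show ?thesis
    proof (cases M1)
      case Nil
      then have "R = []" using tdimer1.prems Cons by auto
      then have "D = []" using tdimer1.hyps by (auto elim: derived.cases)
      then show ?thesis by (intro exI[of _ "[]"] exI[of _ "[TDimer1]"]) (auto simp: ends_def)
    next
      case (Cons t'' M0)
      then show ?thesis using tdimer1.prems \<open>M = t' # M1\<close> by (auto simp: bulk_tile_def)
    qed
  qed
next
  case (tdimer2 R D)
  show ?case
  proof (cases M)
    case Nil then show ?thesis using tdimer2.prems by (auto simp: right_root_tile_def)
  next
    case (Cons t' M1)
    show ?thesis
    proof (cases M1)
      case Nil
      then have "R = []" using tdimer2.prems Cons by auto
      then have "D = []" using tdimer2.hyps by (auto elim: derived.cases)
      then show ?thesis by (intro exI[of _ "[]"] exI[of _ "[TDimer2]"]) (auto simp: ends_def)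
    next
      case (Cons t'' M0)
      then show ?thesis using tdimer2.prems \<open>M = t' # M1\<close> by (auto simp: bulk_tile_def)
    qed
  qed
qed

lemma derived_LD: "derived (LDimer # R) D \<Longrightarrow> \<exists>D0. D = LDimer # D0 \<and> derived R D0"
  by (auto elim: derived.cases)

lemma vmd_dec:
  assumes "D \<in> VMD_tilings a b"
  shows "dec (concat (map word D)) = D" "length (concat (map word D)) = card {a..b}"
proof -
  obtain R where R: "R \<in> root_tilings a b" "derived R D" using assms by (auto simp: VMD_tilings_def)
  then obtain L M E where LME: "R = L @ M @ E" "L = [] \<or> L = [LDimer]" "\<forall>t\<in>set M. bulk_tile t"
     "E = [] \<or> (\<exists>t. E = [t] \<and> right_root_tile t)" "tlen R = card {a..b}"
    by (auto simp: root_tilings_def)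
  have "tlen D = card {a..b}" using derived_tlen[OF R(2)] LME by simp
  then show "length (concat (map word D)) = card {a..b}" by (simp add: tlen_def)
  have "\<exists>L' M' E'. D = L' @ M' @ E' \<and> (L' = [] \<or> L' = [LDimer]) \<and> set M' \<subseteq> mids \<and> E' \<in> ends"
    using LME(2)
  proof
    assume "L = []"
    then show ?thesis using derived_shape[OF R(2)] LME by (metis append_Nil)
  next
    assume "L = [LDimer]"
    then obtain D0 where "D = LDimer # D0" "derived (M @ E) D0" using derived_LD R(2) LME by auto
    then show ?thesis using derived_shape[of "M@E" D0 M E] LME
      by (metis append_Cons append_Nil)
  qed
  then obtain L' M' E' where "D = L' @ M' @ E'" "L' = [] \<or> L' = [LDimer]" "set M' \<subseteq> mids" "E' \<in> ends"
    by blast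
  then show "dec (concat (map word D)) = D" using dec_ok[of L' M' E'] by simp
qed

theorem lemma2p2:
  fixes a b :: int
  shows "inj_on (sigma a b) (VMD_tilings a b)"
proof (rule inj_onI)
  fix D1 D2 assume D: "D1 \<in> VMD_tilings a b" "D2 \<in> VMD_tilings a b" "sigma a b D1 = sigma a b D2"
  have card: "card {a..b} = nat (b - a + 1)" by simp
  have "concat (map word D1) = concat (map word D2)"
  proof (rule nth_equalityI)
    show "length (concat (map word D1)) = length (concat (map word D2))" using vmd_dec D by simp
  next
    fix k assume k: "k < length (concat (map word D1))"
    then have "k < nat (b - a + 1)" using vmd_dec(2)[OF D(1)] card by simp
    then have i: "a \<le> a + int k" "a + int k \<le> b" "nat (a + int k - a) = k" by auto
    have "sigma a b D1 (a + int k) = sigma a b D2 (a + int k)" using D by simp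
    then show "concat (map word D1) ! k = concat (map word D2) ! k"
      using i by (simp add: sigma_def)
  qed
  then show "D1 = D2" using vmd_dec(1)[OF D(1)] vmd_dec(1)[OF D(2)] by metis
qed

end
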